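(* There is an absolute constant $C>0$ such that the following holds. Let $G(V,E)$ be a graph with nonnegative edge weights $w$, let $k\ge c\ge 2$ be integers, and let $G^{(1)},\ldots,G^{(k)}$ be a random $k$-clustering of $G$ with expected multiplicity $c$. Fix a permutation $\pi$ of $E$ in non-increasing order of weight, and for each $i\in[k]$ let $M_i := \mathsf{Greedy}(G^{(i)},\pi_i)$, where $\pi_i$ is the restriction of $\pi$ to the edges of $G^{(i)}$. Let $H$ be the graph on $V$ with edge set $\bigcup_{i=1}^k M_i$. Then $$\mathbb{E}[\mathrm{opt}(H)] \geq \left(\frac12 - C\cdot\frac{\log c}{c}\right)\cdot \mathrm{opt}(G).$$
   Context: $\mathrm{opt}(\cdot)$ denotes the weight of a maximum weight matching. For a graph and an ordering $\pi$ of its edges, $\mathsf{Greedy}(G,\pi)$ scans the edges in the order $\pi$ and adds an edge $(u,v)$ to the matching iff neither $u$ nor $v$ is already matched. A random $k$-clustering of $E$ with expected multiplicity $c$: independently for each edge $e$, draw $c_e\sim\mathrm{Bin}(k,c/k)$ and put $e$ into $c_e$ distinct sets among $E^{(1)},\ldots,E^{(k)}$ chosen uniformly at random; $G^{(i)}:=G(V,E^{(i)})$. The expectation is over the random clustering. *)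

theory Defs
  imports "HOL-Probability.Probability"
begin

definition simple_graph_on :: "'a set \<Rightarrow> 'a set set \<Rightarrow> bool" where
  "simple_graph_on V E \<longleftrightarrow> finite V \<and>
     E \<subseteq> {e. \<exists>u v. u \<in> V \<and> v \<in> V \<and> u \<noteq> v \<and> e = {u, v}}"

definition is_matching :: "'a set set \<Rightarrow> bool" where
  "is_matching M \<longleftrightarrow> (\<forall>e\<in>M. \<forall>f\<in>M. e \<noteq> f \<longrightarrow> e \<inter> f = {})"

definition opt :: "('a set \<Rightarrow> real) \<Rightarrow> 'a set set \<Rightarrow> real" where
  "opt w E = Max ((\<lambda>M. sum w M) ` {M. M \<subseteq> E \<and> is_matching M})"

fun greedy_aux :: "'a set list \<Rightarrow> 'a set set \<Rightarrow> 'a set set" where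
  "greedy_aux [] M = M"
| "greedy_aux (e # es) M = greedy_aux es (if e \<inter> \<Union>M = {} then insert e M else M)"

definition greedy :: "'a set list \<Rightarrow> 'a set set" where
  "greedy \<pi> = greedy_aux \<pi> {}"

definition cluster_set_pmf :: "nat \<Rightarrow> nat \<Rightarrow> nat set pmf" where
  "cluster_set_pmf k c =
     bind_pmf (binomial_pmf k (real c / real k))
       (\<lambda>m. pmf_of_set {S. S \<subseteq> {..<k} \<and> card S = m})"

text \<open>Random k-clustering with expected multiplicity c: independent over edges.
  An outcome assigns to each edge e the set of indices i with e in E^(i).\<close>
definition random_clustering :: "'a set set \<Rightarrow> nat \<Rightarrow> nat \<Rightarrow> ('a set \<Rightarrow> nat set) pmf" where
  "random_clustering E k c = Pi_pmf E {} (\<lambda>_. cluster_set_pmf k c)"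

definition greedy_union :: "'a set list \<Rightarrow> nat \<Rightarrow> ('a set \<Rightarrow> nat set) \<Rightarrow> 'a set set" where
  "greedy_union \<pi> k S = (\<Union>i<k. greedy (filter (\<lambda>e. i \<in> S e) \<pi>))"

end

theory Submission
  imports Defs
begin

lemma greedy_aux_mono: "M \<subseteq> greedy_aux xs M"
  by (induction xs arbitrary: M) (auto, blast)

lemma greedy_aux_subset: "greedy_aux xs M \<subseteq> M \<union> set xs"
proof (induction xs arbitrary: M)
  case (Cons a xs)
  show ?case
  proof (cases "a \<inter> \<Union>M = {}")
    case True
    then show ?thesis using Cons.IH[of "insert a M"] by auto
  next
    case False
    then show ?thesis using Cons.IH[of "M"] by auto
  qed
qed simp

lemma greedy_aux_append: "greedy_aux (xs @ ys) M = greedy_aux ys (greedy_aux xs M)"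
  by (induction xs arbitrary: M) auto

lemma greedy_aux_matching: "is_matching M \<Longrightarrow> is_matching (greedy_aux xs M)"
proof (induction xs arbitrary: M)
  case Nil then show ?case by simp
next
  case (Cons e xs)
  have "is_matching (if e \<inter> \<Union>M = {} then insert e M else M)"
    using Cons.prems unfolding is_matching_def by auto
  then show ?case using Cons.IH by simp
qed

lemma greedy_matching: "is_matching (greedy xs)"
  unfolding greedy_def by (rule greedy_aux_matching) (simp add: is_matching_def)

lemma greedy_subset: "greedy xs \<subseteq> set xs"
  unfolding greedy_def using greedy_aux_subset[of xs "{}"] by simp

lemma greedy_append_mono: "greedy xs \<subseteq> greedy (xs @ ys)"
  unfolding greedy_def greedy_aux_append by (rule greedy_aux_mono)

lemma greedy_add: "f \<inter> \<Union>(greedy xs) = {} \<Longrightarrow> f \<in> greedy (xs @ f # ys)"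
proof -
  assume a: "f \<inter> \<Union>(greedy xs) = {}"
  have "greedy (xs @ f # ys) = greedy_aux ys (insert f (greedy xs))"
    using a unfolding greedy_def by (simp add: greedy_aux_append)
  then show ?thesis using greedy_aux_mono by blast
qed

definition preL :: "'a list \<Rightarrow> 'a \<Rightarrow> 'a list" where
  "preL \<pi> f = takeWhile (\<lambda>e. e \<noteq> f) \<pi>"

definition Mi :: "'a set list \<Rightarrow> ('a set \<Rightarrow> nat set) \<Rightarrow> nat \<Rightarrow> 'a set set" where
  "Mi \<pi> S i = greedy (filter (\<lambda>e. i \<in> S e) \<pi>)"

definition Aok :: "'a set list \<Rightarrow> ('a set \<Rightarrow> nat set) \<Rightarrow> nat \<Rightarrow> 'a set \<Rightarrow> bool" where
  "Aok \<pi> S i f \<longleftrightarrow> f \<inter> \<Union>(greedy (filter (\<lambda>e. i \<in> S e) (preL \<pi> f))) = {}"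

definition Iset :: "'a set list \<Rightarrow> nat \<Rightarrow> ('a set \<Rightarrow> nat set) \<Rightarrow> 'a set \<Rightarrow> nat set" where
  "Iset \<pi> k S f = {i. i < k \<and> Aok \<pi> S i f}"

lemma preL_split:
  assumes "f \<in> set \<pi>"
  shows "\<exists>post. \<pi> = preL \<pi> f @ f # post \<and> f \<notin> set (preL \<pi> f)"
proof -
  obtain ys zs where "\<pi> = ys @ f # zs" "f \<notin> set ys"
    using split_list_first[OF assms] by blast
  moreover have "preL \<pi> f = ys" using calculation unfolding preL_def
    by (induction ys arbitrary: \<pi>) auto
  ultimately show ?thesis by auto
qed

lemma Aok_in_Mi:
  assumes "f \<in> set \<pi>" "Aok \<pi> S i f" "i \<in> S f"
  shows "f \<in> Mi \<pi> S i"
proof -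
  obtain post where p: "\<pi> = preL \<pi> f @ f # post" using preL_split[OF assms(1)] by blast
  have "filter (\<lambda>e. i \<in> S e) \<pi> = filter (\<lambda>e. i \<in> S e) (preL \<pi> f) @ f # filter (\<lambda>e. i \<in> S e) post"
    using assms(3) by (subst p) simp
  then show ?thesis using assms(2) greedy_add unfolding Mi_def Aok_def by metis
qed

lemma not_Aok_blocker:
  assumes "f \<in> set \<pi>" "\<not> Aok \<pi> S i f" "sorted_wrt (\<lambda>e f. w e \<ge> w f) \<pi>"
  shows "\<exists>g\<in>Mi \<pi> S i. g \<inter> f \<noteq> {} \<and> w f \<le> w g"
proof -
  obtain post where p: "\<pi> = preL \<pi> f @ f # post" using preL_split[OF assms(1)] by blast
  obtain g where g: "g \<in> greedy (filter (\<lambda>e. i \<in> S e) (preL \<pi> f))" "g \<inter> f \<noteq> {}"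
    using assms(2) unfolding Aok_def by blast
  have "g \<in> set (preL \<pi> f)" using g(1) greedy_subset by fastforce
  then have "w f \<le> w g" using assms(3) by (subst (asm) (2) p) (auto simp: sorted_wrt_append)
  moreover have "g \<in> Mi \<pi> S i"
  proof -
    have "filter (\<lambda>e. i \<in> S e) \<pi> = filter (\<lambda>e. i \<in> S e) (preL \<pi> f) @ filter (\<lambda>e. i \<in> S e) (f # post)"
      by (subst p) simp
    then show ?thesis using g(1) greedy_append_mono unfolding Mi_def by (metis subsetD)
  qed
  ultimately show ?thesis using g(2) by blast
qed

lemma greedy_union_Mi: "greedy_union \<pi> k S = (\<Union>i<k. Mi \<pi> S i)"
  unfolding greedy_union_def Mi_def by simp

lemma Mi_subset: "Mi \<pi> S i \<subseteq> set \<pi>"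
  unfolding Mi_def using greedy_subset by fastforce

lemma Mi_S: "g \<in> Mi \<pi> S i \<Longrightarrow> i \<in> S g"
  unfolding Mi_def using greedy_subset by fastforce

lemma opt_ge:
  assumes "finite H" "N \<subseteq> H" "is_matching N"
  shows "sum w N \<le> opt w H"
proof -
  have "finite {M. M \<subseteq> H \<and> is_matching M}" using assms(1) by simp
  then show ?thesis unfolding opt_def using assms by (intro Max_ge) auto
qed

lemma card_touching:
  assumes "is_matching Ms" "finite g" "card g = 2"
  shows "card {f\<in>Ms. f \<inter> g \<noteq> {}} \<le> 2"
proof -
  let ?T = "{f\<in>Ms. f \<inter> g \<noteq> {}}"
  let ?h = "\<lambda>f. SOME v. v \<in> f \<inter> g"
  have h: "?h f \<in> f \<inter> g" if "f \<in> ?T" for f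
  proof -
    from that obtain v where "v \<in> f \<inter> g" by blast
    then show ?thesis by (rule someI)
  qed
  have "inj_on ?h ?T"
  proof (rule inj_onI)
    fix f f' assume a: "f \<in> ?T" "f' \<in> ?T" "?h f = ?h f'"
    have "?h f \<in> f" using h[OF a(1)] by blast
    moreover have "?h f \<in> f'" using h[OF a(2)] a(3) by simp
    ultimately have "f \<inter> f' \<noteq> {}" by blast
    moreover have "f \<in> Ms" "f' \<in> Ms" using a by auto
    ultimately show "f = f'" using assms(1) unfolding is_matching_def by blast
  qed
  moreover have "?h ` ?T \<subseteq> g" using h by blast
  ultimately have "card ?T \<le> card g" using assms(2) by (rule card_inj_on_le)
  then show ?thesis using assms by simp
qed

lemma core_i:
  fixes w :: "'a set \<Rightarrow> real"
  assumes fin: "finite E" and two: "\<forall>e\<in>E. finite e \<and> card e = 2"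
    and setpi: "set \<pi> = E" and sorted: "sorted_wrt (\<lambda>e f. w e \<ge> w f) \<pi>"
    and wpos: "\<forall>e\<in>E. w e \<ge> 0"
    and MsE: "Ms \<subseteq> E" and Msm: "is_matching Ms" and ik: "i < k"
  shows "sum w Ms - (\<Sum>f\<in>Ms. w f * (if Aok \<pi> S i f \<and> S f \<inter> Iset \<pi> k S f = {} then 1 else 0))
           \<le> 2 * opt w (greedy_union \<pi> k S)"
proof -
  define H where "H = greedy_union \<pi> k S"
  define M where "M = Mi \<pi> S i"
  have HE: "H \<subseteq> E" unfolding H_def greedy_union_Mi using Mi_subset setpi by blast
  have finH: "finite H" using HE fin finite_subset by blast
  have MH: "M \<subseteq> H" unfolding H_def M_def greedy_union_Mi using ik by blast
  have ME: "M \<subseteq> E" using MH HE by blast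
  have finM: "finite M" using ME fin finite_subset by blast
  have finMs: "finite Ms" using MsE fin finite_subset by blast
  have Mm: "is_matching M" unfolding M_def Mi_def by (rule greedy_matching)
  define D where "D = {f\<in>Ms. Aok \<pi> S i f \<and> i \<notin> S f}"
  define F where "F = {f\<in>D. f \<in> H}"
  define R where "R = {g\<in>M. \<exists>f\<in>F. g \<inter> f \<noteq> {}}"
  define \<beta> where "\<beta> f = (if Aok \<pi> S i f then f else SOME g. g\<in>M \<and> g \<inter> f \<noteq> {} \<and> w f \<le> w g)" for f
  have beta: "\<beta> f \<in> M \<and> \<beta> f \<inter> f \<noteq> {} \<and> w f \<le> w (\<beta> f)" if f: "f \<in> Ms - D" for f
  proof (cases "Aok \<pi> S i f")
    case True
    then have "i \<in> S f" using f unfolding D_def by auto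
    then have "f \<in> M" using Aok_in_Mi True f MsE setpi unfolding M_def by blast
    moreover have "f \<noteq> {}" using two f MsE by fastforce
    ultimately show ?thesis using True unfolding \<beta>_def by simp
  next
    case False
    then have "\<exists>g. g\<in>M \<and> g \<inter> f \<noteq> {} \<and> w f \<le> w g"
      using not_Aok_blocker[of f \<pi> S i w] f MsE setpi sorted unfolding M_def by blast
    then have "(SOME g. g\<in>M \<and> g \<inter> f \<noteq> {} \<and> w f \<le> w g) \<in> M \<and>
       (SOME g. g\<in>M \<and> g \<inter> f \<noteq> {} \<and> w f \<le> w g) \<inter> f \<noteq> {} \<and>
       w f \<le> w (SOME g. g\<in>M \<and> g \<inter> f \<noteq> {} \<and> w f \<le> w g)"
      by (rule someI_ex)
    moreover have "\<beta> f = (SOME g. g\<in>M \<and> g \<inter> f \<noteq> {} \<and> w f \<le> w g)"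
      using False unfolding \<beta>_def by simp
    ultimately show ?thesis by simp
  qed
  have cardb: "card {f\<in>Ms - D. \<beta> f = g} \<le> (if g \<in> R then 1 else 2)" if g: "g \<in> M" for g
  proof -
    have g2: "finite g" "card g = 2" using two g ME by auto
    have sub: "{f\<in>Ms - D. \<beta> f = g} \<subseteq> {f\<in>Ms. f \<inter> g \<noteq> {}}" using beta by fastforce
    have T2: "card {f\<in>Ms. f \<inter> g \<noteq> {}} \<le> 2" using card_touching[OF Msm g2] .
    have finT: "finite {f\<in>Ms. f \<inter> g \<noteq> {}}" using finMs by simp
    show ?thesis
    proof (cases "g \<in> R")
      case True
      then obtain f0 where f0: "f0 \<in> F" "g \<inter> f0 \<noteq> {}" unfolding R_def by blast
      have "f0 \<in> {f\<in>Ms. f \<inter> g \<noteq> {}}" using f0 unfolding F_def D_def by blast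
      moreover have "{f\<in>Ms - D. \<beta> f = g} \<subseteq> {f\<in>Ms. f \<inter> g \<noteq> {}} - {f0}"
        using sub f0 unfolding F_def by blast
      then have "card {f\<in>Ms - D. \<beta> f = g} \<le> card ({f\<in>Ms. f \<inter> g \<noteq> {}} - {f0})"
        using finT by (intro card_mono) auto
      moreover have "card ({f\<in>Ms. f \<inter> g \<noteq> {}} - {f0}) = card {f\<in>Ms. f \<inter> g \<noteq> {}} - 1"
        using \<open>f0 \<in> {f\<in>Ms. f \<inter> g \<noteq> {}}\<close> by (rule card_Diff_singleton)
      ultimately have "card {f\<in>Ms - D. \<beta> f = g} \<le> card {f\<in>Ms. f \<inter> g \<noteq> {}} - 1"
        by simp
      then show ?thesis using True T2 by simp
    next
      case False
      then show ?thesis using card_mono[OF finT sub] T2 by simp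
    qed
  qed
  have wM: "w g \<ge> 0" if "g \<in> M" for g using that ME wpos by blast
  have step1: "(\<Sum>f\<in>Ms - D. w f) \<le> (\<Sum>g\<in>M. w g * (if g \<in> R then 1 else 2))"
  proof -
    have "(\<Sum>f\<in>Ms - D. w f) \<le> (\<Sum>f\<in>Ms - D. w (\<beta> f))"
      using beta by (intro sum_mono) auto
    also have "\<dots> = (\<Sum>g\<in>\<beta> ` (Ms - D). \<Sum>f\<in>{x\<in>Ms - D. \<beta> x = g}. w (\<beta> f))"
      using finMs by (intro sum.image_gen) auto
    also have "\<dots> = (\<Sum>g\<in>\<beta> ` (Ms - D). w g * card {x\<in>Ms - D. \<beta> x = g})"
      by (intro sum.cong) auto
    also have "\<dots> \<le> (\<Sum>g\<in>\<beta> ` (Ms - D). w g * (if g \<in> R then 1 else 2))"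
    proof (intro sum_mono)
      fix g assume "g \<in> \<beta> ` (Ms - D)"
      then have g: "g \<in> M" using beta by blast
      have "real (card {x\<in>Ms - D. \<beta> x = g}) \<le> (if g \<in> R then 1 else 2)"
        using cardb[OF g] by (auto split: if_splits)
      then show "w g * real (card {x\<in>Ms - D. \<beta> x = g}) \<le> w g * (if g \<in> R then 1 else 2)"
        using wM[OF g] by (intro mult_left_mono) auto
    qed
    also have "\<dots> \<le> (\<Sum>g\<in>M. w g * (if g \<in> R then 1 else 2))"
      using beta finM wM by (intro sum_mono2) auto
    finally show ?thesis .
  qed
  have RM: "R \<subseteq> M" unfolding R_def by blast
  have step2: "(\<Sum>g\<in>M. w g * (if g \<in> R then 1 else 2)) = 2 * sum w M - sum w R"
  proof -
    have "(\<Sum>g\<in>M. w g * (if g \<in> R then 1 else 2)) = (\<Sum>g\<in>M. 2 * w g - (if g \<in> R then w g else 0))"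
      by (intro sum.cong) auto
    also have "\<dots> = 2 * sum w M - (\<Sum>g\<in>M. if g \<in> R then w g else 0)"
      by (simp add: sum_subtractf sum_distrib_left)
    also have "(\<Sum>g\<in>M. if g \<in> R then w g else 0) = sum w R"
      using RM finM by (simp add: sum.If_cases Int_absorb1)
    finally show ?thesis .
  qed
  define N where "N = (M - R) \<union> F"
  have FM: "F \<inter> M = {}" using Mi_S unfolding F_def D_def M_def by blast
  have FH: "F \<subseteq> H" unfolding F_def by blast
  have FMs: "F \<subseteq> Ms" unfolding F_def D_def by blast
  have NH: "N \<subseteq> H" unfolding N_def using MH FH by blast
  have Nm: "is_matching N"
    unfolding is_matching_def N_def
  proof (intro ballI impI)
    fix e f assume e: "e \<in> M - R \<union> F" and f: "f \<in> M - R \<union> F" and ef: "e \<noteq> f"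
    show "e \<inter> f = {}"
    proof (cases "e \<in> F")
      case True
      show ?thesis
      proof (cases "f \<in> F")
        case True
        then show ?thesis using \<open>e \<in> F\<close> FMs Msm ef unfolding is_matching_def by blast
      next
        case False
        then have "f \<in> M - R" using f by blast
        then show ?thesis using \<open>e \<in> F\<close> unfolding R_def by blast
      qed
    next
      case False
      then have eM: "e \<in> M - R" using e by blast
      show ?thesis
      proof (cases "f \<in> F")
        case True
        then show ?thesis using eM unfolding R_def by blast
      next
        case False
        then have "f \<in> M" using f by blast
        then show ?thesis using eM Mm ef unfolding is_matching_def by blast
      qed
    qed
  qed
  have finF: "finite F" using FMs finMs finite_subset by blast
  have sumN: "sum w N = sum w M - sum w R + sum w F"
  proof -
    have "sum w N = sum w (M - R) + sum w F"
      unfolding N_def using FM finM finF by (intro sum.union_disjoint) auto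
    also have "sum w (M - R) = sum w M - sum w R" using RM finM by (simp add: sum_diff)
    finally show ?thesis .
  qed
  have o1: "sum w M \<le> opt w H" using opt_ge[OF finH MH Mm] .
  have o2: "sum w N \<le> opt w H" using opt_ge[OF finH NH Nm] .
  have DMs: "D \<subseteq> Ms" unfolding D_def by blast
  have FD: "F \<subseteq> D" unfolding F_def by blast
  have split: "sum w Ms = (\<Sum>f\<in>Ms - D. w f) + (\<Sum>f\<in>D - F. w f) + sum w F"
  proof -
    have "sum w Ms = sum w (Ms - D) + sum w D" by (rule sum.subset_diff[OF DMs finMs])
    moreover have finD: "finite D" using finMs DMs finite_subset by blast
    moreover have "sum w D = sum w (D - F) + sum w F" by (rule sum.subset_diff[OF FD finD])
    ultimately show ?thesis by simp
  qed
  have step3: "(\<Sum>f\<in>D - F. w f) \<le> (\<Sum>f\<in>Ms. w f * (if Aok \<pi> S i f \<and> S f \<inter> Iset \<pi> k S f = {} then 1 else 0))"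
  proof -
    have ind: "Aok \<pi> S i f \<and> S f \<inter> Iset \<pi> k S f = {}" if f: "f \<in> D - F" for f
    proof -
      have fH: "f \<notin> H" and fA: "Aok \<pi> S i f" and fMs: "f \<in> Ms" using f unfolding F_def D_def by auto
      have "j \<notin> S f" if "j \<in> Iset \<pi> k S f" for j
      proof
        assume "j \<in> S f"
        moreover have "j < k" "Aok \<pi> S j f" using that unfolding Iset_def by auto
        ultimately have "f \<in> Mi \<pi> S j" using Aok_in_Mi fMs MsE setpi by blast
        then have "f \<in> H" unfolding H_def greedy_union_Mi using \<open>j < k\<close> by blast
        then show False using fH by blast
      qed
      then show ?thesis using fA by blast
    qed
    have "(\<Sum>f\<in>D - F. w f) = (\<Sum>f\<in>D - F. w f * (if Aok \<pi> S i f \<and> S f \<inter> Iset \<pi> k S f = {} then 1 else 0))"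
      using ind by (intro sum.cong) auto
    also have "\<dots> \<le> (\<Sum>f\<in>Ms. w f * (if Aok \<pi> S i f \<and> S f \<inter> Iset \<pi> k S f = {} then 1 else 0))"
      using DMs finMs wpos MsE by (intro sum_mono2) auto
    finally show ?thesis .
  qed
  show ?thesis
    using step1 step2 sumN o1 o2 split step3 unfolding H_def by linarith
qed

lemma choose_Suc_mult: "(a choose Suc m) * Suc m = (a choose m) * (a - m)"
proof (cases a)
  case 0 then show ?thesis by simp
next
  case (Suc n)
  have "Suc n * (n choose m) = (Suc n choose Suc m) * Suc m" by (rule Suc_times_binomial_eq)
  moreover have "(Suc n - m) * (Suc n choose m) = Suc n * ((Suc n - 1) choose m)" by (rule binomial_absorb_comp)
  ultimately show ?thesis using Suc by (simp add: mult.commute)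
qed

lemma choose_ratio:
  assumes "a \<le> k"
  shows "real (a choose m) * real k ^ m \<le> real a ^ m * real (k choose m)"
proof (induction m)
  case 0 then show ?case by simp
next
  case (Suc m)
  have e1: "real (a choose Suc m) * real (Suc m) = real (a choose m) * real (a - m)"
    using choose_Suc_mult[of a m] by (metis of_nat_mult)
  have e2: "real (k choose Suc m) * real (Suc m) = real (k choose m) * real (k - m)"
    using choose_Suc_mult[of k m] by (metis of_nat_mult)
  have key: "real (a - m) * real k \<le> real a * real (k - m)"
  proof (cases "m \<le> a")
    case True
    then have "m \<le> k" using assms by simp
    then show ?thesis using True assms by (simp add: of_nat_diff algebra_simps mult_right_mono)
  next
    case False then show ?thesis by simp
  qed
  have "real (a choose Suc m) * real k ^ Suc m * real (Suc m)
        = (real (a choose Suc m) * real (Suc m)) * (real k ^ m * real k)"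
    by (simp only: power_Suc mult_ac)
  also have "\<dots> = (real (a choose m) * real (a - m)) * (real k ^ m * real k)"
    by (simp only: e1)
  also have "\<dots> = (real (a choose m) * real k ^ m) * (real (a - m) * real k)"
    by (simp only: mult_ac)
  also have "\<dots> \<le> (real a ^ m * real (k choose m)) * (real (a - m) * real k)"
    using Suc.IH by (intro mult_right_mono) auto
  also have "\<dots> \<le> (real a ^ m * real (k choose m)) * (real a * real (k - m))"
    using key by (intro mult_left_mono) auto
  also have "\<dots> = (real a ^ m * real a) * (real (k choose m) * real (k - m))"
    by (simp only: mult_ac)
  also have "\<dots> = (real a ^ m * real a) * (real (k choose Suc m) * real (Suc m))"
    by (simp only: e2)
  also have "\<dots> = real a ^ Suc m * real (k choose Suc m) * real (Suc m)"
    by (simp only: power_Suc mult_ac)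
  finally have "real (a choose Suc m) * real k ^ Suc m * real (Suc m)
     \<le> real a ^ Suc m * real (k choose Suc m) * real (Suc m)" .
  then show ?case by (simp del: of_nat_Suc)
qed

lemma exp_bound:
  fixes x c :: real
  assumes "0 \<le> x" "0 < c"
  shows "x * exp (- (c * x)) \<le> 1 / c"
proof -
  have "c * x \<le> exp (c * x)" using exp_ge_add_one_self[of "c*x"] by linarith
  then have "c * x * exp (- (c * x)) \<le> 1"
    by (metis exp_gt_zero exp_minus_inverse mult.commute mult_right_mono less_imp_le)
  then show ?thesis using assms by (simp add: field_simps)
qed

lemma final_numeric:
  assumes "N \<le> k" "1 \<le> c" "c \<le> k"
  shows "real N / real k * (1 - real c / real k * (real N / real k)) ^ k \<le> 1 / real c"
proof -
  define x where "x = real N / real k"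
  have k0: "real k > 0" using assms by simp
  have x01: "0 \<le> x" "x \<le> 1" using assms k0 unfolding x_def by (auto simp: field_simps)
  have p01: "0 \<le> real c / real k" "real c / real k \<le> 1" using assms k0 by (auto simp: field_simps)
  have b0: "0 \<le> 1 - real c / real k * x" using x01 p01 by (smt (verit) mult_le_one)
  have "1 - real c / real k * x \<le> exp (- (real c / real k * x))"
    using exp_ge_add_one_self[of "- (real c / real k * x)"] by linarith
  then have "(1 - real c / real k * x) ^ k \<le> exp (- (real c / real k * x)) ^ k"
    using b0 by (intro power_mono) auto
  also have "\<dots> = exp (- (real c * x))"
    using k0 by (simp add: exp_of_nat_mult[symmetric] field_simps)
  finally have "x * (1 - real c / real k * x) ^ k \<le> x * exp (- (real c * x))"
    using x01 by (intro mult_left_mono) auto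
  also have "\<dots> \<le> 1 / real c" using exp_bound[of x "real c"] x01 assms by simp
  finally show ?thesis unfolding x_def .
qed

lemma set_pmf_cluster:
  assumes "c \<le> k"
  shows "set_pmf (cluster_set_pmf k c) \<subseteq> Pow {..<k}"
proof -
  have p01: "real c / real k \<in> {0..1}" using assms by (cases "k = 0") (auto simp: field_simps)
  have bin: "set_pmf (binomial_pmf k (real c / real k)) \<subseteq> {..k}"
    using p01 by (auto simp: set_pmf_binomial_eq split: if_splits)
  have "set_pmf (pmf_of_set {S. S \<subseteq> {..<k} \<and> card S = m}) \<subseteq> Pow {..<k}" if m: "m \<le> k" for m
  proof -
    have "{..<m} \<in> {S. S \<subseteq> {..<k} \<and> card S = m}" using m by auto
    then have ne: "{S. S \<subseteq> {..<k} \<and> card S = m} \<noteq> {}" by blast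
    have "finite {S. S \<subseteq> {..<k} \<and> card S = m}" by (rule finite_subset[of _ "Pow {..<k}"]) auto
    then show ?thesis using ne by (subst set_pmf_of_set) auto
  qed
  then show ?thesis using bin unfolding cluster_set_pmf_def by (auto simp: set_bind_pmf)
qed

lemma finite_set_pmf_cluster: "c \<le> k \<Longrightarrow> finite (set_pmf (cluster_set_pmf k c))"
  by (rule finite_subset[OF set_pmf_cluster]) auto

lemma prob_avoid:
  fixes I :: "nat set"
  assumes I: "I \<subseteq> {..<k}" and c: "1 \<le> c" "c \<le> k"
  shows "measure_pmf.expectation (cluster_set_pmf k c) (\<lambda>y. if y \<inter> I = {} then 1 else 0 :: real)
         \<le> (1 - real c / real k * (real (card I) / real k)) ^ k"
proof -
  define p where "p = real c / real k"
  define x where "x = real (card I) / real k"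
  define Sm where "Sm m = {S. S \<subseteq> {..<k} \<and> card S = m}" for m
  have k0: "real k > 0" using c by simp
  have p01: "p \<in> {0..1}" using c k0 unfolding p_def by (auto simp: field_simps)
  have finSm: "finite (Sm m)" for m unfolding Sm_def by (rule finite_subset[of _ "Pow {..<k}"]) auto
  have neSm: "Sm m \<noteq> {}" if "m \<le> k" for m
  proof -
    have "{..<m} \<in> Sm m" using that unfolding Sm_def by auto
    then show ?thesis by blast
  qed
  have cardSm: "card (Sm m) = k choose m" for m unfolding Sm_def using n_subsets[of "{..<k}" m] by simp
  have NI: "card I \<le> k" using I by (metis card_lessThan card_mono finite_lessThan)
  have avoid: "card {y\<in>Sm m. y \<inter> I = {}} = (k - card I) choose m" for m
  proof -
    have "{y\<in>Sm m. y \<inter> I = {}} = {y. y \<subseteq> {..<k} - I \<and> card y = m}" unfolding Sm_def by auto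
    moreover have "card ({..<k} - I) = k - card I" using I by (simp add: card_Diff_subset finite_subset)
    ultimately show ?thesis using n_subsets[of "{..<k} - I" m] by simp
  qed
  have inner: "measure_pmf.expectation (pmf_of_set (Sm m)) (\<lambda>y. if y \<inter> I = {} then 1 else 0 :: real)
      \<le> (1 - x) ^ m" if m: "m \<le> k" for m
  proof -
    have "measure_pmf.expectation (pmf_of_set (Sm m)) (\<lambda>y. if y \<inter> I = {} then 1 else 0 :: real)
        = (\<Sum>y\<in>Sm m. if y \<inter> I = {} then 1 else 0 :: real) / real (card (Sm m))"
      using finSm neSm[OF m] by (subst integral_pmf_of_set) auto
    also have "(\<Sum>y\<in>Sm m. if y \<inter> I = {} then 1 else 0 :: real) = real (card {y\<in>Sm m. y \<inter> I = {}})"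
      using finSm[of m] by (simp add: sum.If_cases Int_def)
    also have "\<dots> = real ((k - card I) choose m)" using avoid by simp
    also have "real ((k - card I) choose m) / real (card (Sm m)) \<le> (1 - x) ^ m"
    proof -
      have pos: "real (k choose m) > 0" using m by simp
      have "real ((k - card I) choose m) * real k ^ m \<le> real (k - card I) ^ m * real (k choose m)"
        by (rule choose_ratio) simp
      moreover have "(1 - x) ^ m = real (k - card I) ^ m / real k ^ m"
        unfolding x_def using k0 NI by (simp add: of_nat_diff field_simps power_divide)
      ultimately have "real k ^ m * real ((k - card I) choose m) \<le> real k ^ m * (real (k choose m) * (1 - x) ^ m)"
        using k0 by (simp add: field_simps)
      then have "real ((k - card I) choose m) \<le> real (k choose m) * (1 - x) ^ m"
        using k0 by (simp add: mult_le_cancel_left_pos)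
      then show ?thesis using pos unfolding cardSm by (simp add: divide_le_eq mult.commute)
    qed
    finally show ?thesis .
  qed
  have "measure_pmf.expectation (cluster_set_pmf k c) (\<lambda>y. if y \<inter> I = {} then 1 else 0 :: real)
      = (\<Sum>m\<in>{..k}. pmf (binomial_pmf k p) m *\<^sub>R
          measure_pmf.expectation (pmf_of_set (Sm m)) (\<lambda>y. if y \<inter> I = {} then 1 else 0 :: real))"
    unfolding cluster_set_pmf_def p_def[symmetric] Sm_def[symmetric]
  proof (rule pmf_expectation_bind)
    show "finite {..k}" by simp
    show "finite (set_pmf (pmf_of_set (Sm m)))" if "m \<in> {..k}" for m
      using that finSm neSm by (subst set_pmf_of_set) auto
    show "set_pmf (binomial_pmf k p) \<subseteq> {..k}"
      using p01 by (auto simp: set_pmf_binomial_eq split: if_splits)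
  qed
  also have "\<dots> \<le> (\<Sum>m\<in>{..k}. pmf (binomial_pmf k p) m * (1 - x) ^ m)"
    using inner by (intro sum_mono) (auto intro: mult_left_mono)
  also have "\<dots> = (\<Sum>m\<in>{..k}. real (k choose m) * (p * (1 - x)) ^ m * (1 - p) ^ (k - m))"
    using p01 by (intro sum.cong) (auto simp: power_mult_distrib)
  also have "\<dots> = (p * (1 - x) + (1 - p)) ^ k"
    by (subst binomial_ring) simp
  also have "p * (1 - x) + (1 - p) = 1 - real c / real k * (real (card I) / real k)"
    unfolding p_def x_def by (simp add: algebra_simps)
  finally show ?thesis .
qed

lemma Iset_upd: "Iset \<pi> k (T(f:=y)) f = Iset \<pi> k T f"
proof -
  have "filter (\<lambda>e. i \<in> (T(f:=y)) e) (preL \<pi> f) = filter (\<lambda>e. i \<in> T e) (preL \<pi> f)" for i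
    unfolding preL_def by (rule filter_cong) (auto dest: set_takeWhileD)
  then show ?thesis unfolding Iset_def Aok_def by simp
qed

lemma Iset_sub: "Iset \<pi> k S f \<subseteq> {..<k}" unfolding Iset_def by auto

lemma expect_Q:
  assumes finE: "finite E" and fE: "f \<in> E" and c: "1 \<le> c" "c \<le> k"
  shows "measure_pmf.expectation (random_clustering E k c)
           (\<lambda>S. real (card (Iset \<pi> k S f)) / real k * (if S f \<inter> Iset \<pi> k S f = {} then 1 else 0))
         \<le> 1 / real c"
proof -
  define q where "q = cluster_set_pmf k c"
  define P where "P = Pi_pmf (E - {f}) {} (\<lambda>_. q)"
  define \<phi> where "\<phi> T = real (card (Iset \<pi> k T f)) / real k" for T
  define \<psi> where "\<psi> y T = (if y \<inter> Iset \<pi> k T f = {} then 1 else 0 :: real)" for y T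
  have k0: "real k > 0" using c by simp
  have EE: "E = insert f (E - {f})" using fE by blast
  have rc: "random_clustering E k c = map_pmf (\<lambda>(y,T). T(f:=y)) (pair_pmf q P)"
    unfolding random_clustering_def P_def q_def
    by (subst EE) (rule Pi_pmf_insert, use finE in auto)
  define Y where "Y = set_pmf q"
  define TT where "TT = set_pmf P"
  have finY: "finite Y" unfolding Y_def q_def using finite_set_pmf_cluster c by blast
  have finTT: "finite TT"
  proof -
    have "TT \<subseteq> PiE_dflt (E - {f}) {} (set_pmf \<circ> (\<lambda>_. q))"
      unfolding TT_def P_def by (rule set_Pi_pmf_subset') (use finE in auto)
    moreover have "finite (PiE_dflt (E - {f}) {} (set_pmf \<circ> (\<lambda>_. q)))"
      using finE finY unfolding Y_def by (intro finite_PiE_dflt) auto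
    ultimately show ?thesis by (rule finite_subset)
  qed
  have "measure_pmf.expectation (random_clustering E k c)
           (\<lambda>S. real (card (Iset \<pi> k S f)) / real k * (if S f \<inter> Iset \<pi> k S f = {} then 1 else 0))
      = measure_pmf.expectation (pair_pmf q P) (\<lambda>z. \<phi> (snd z) * \<psi> (fst z) (snd z))"
    unfolding rc by (simp add: case_prod_beta Iset_upd \<phi>_def \<psi>_def)
  also have "\<dots> = (\<Sum>z\<in>Y \<times> TT. \<phi> (snd z) * \<psi> (fst z) (snd z) * pmf (pair_pmf q P) z)"
    by (rule integral_measure_pmf_real) (use finY finTT in \<open>auto simp: Y_def TT_def\<close>)
  also have "\<dots> = (\<Sum>y\<in>Y. \<Sum>T\<in>TT. \<phi> T * \<psi> y T * (pmf q y * pmf P T))"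
    by (subst sum.cartesian_product) (intro sum.cong, auto simp: pmf_pair)
  also have "\<dots> = (\<Sum>T\<in>TT. \<Sum>y\<in>Y. \<phi> T * \<psi> y T * (pmf q y * pmf P T))"
    by (rule sum.swap)
  also have "\<dots> = (\<Sum>T\<in>TT. pmf P T * (\<phi> T * (\<Sum>y\<in>Y. \<psi> y T * pmf q y)))"
    by (intro sum.cong) (auto simp: sum_distrib_left algebra_simps)
  also have "\<dots> \<le> (\<Sum>T\<in>TT. pmf P T * (1 / real c))"
  proof (intro sum_mono mult_left_mono)
    fix T assume "T \<in> TT"
    have "(\<Sum>y\<in>Y. \<psi> y T * pmf q y) = measure_pmf.expectation q (\<lambda>y. \<psi> y T)"
      by (rule integral_measure_pmf_real[symmetric]) (use finY in \<open>auto simp: Y_def\<close>)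
    also have "\<dots> \<le> (1 - real c / real k * (real (card (Iset \<pi> k T f)) / real k)) ^ k"
      unfolding q_def \<psi>_def by (rule prob_avoid[OF Iset_sub c])
    finally have a: "(\<Sum>y\<in>Y. \<psi> y T * pmf q y) \<le> (1 - real c / real k * (real (card (Iset \<pi> k T f)) / real k)) ^ k" .
    have N: "card (Iset \<pi> k T f) \<le> k"
      using Iset_sub by (metis card_lessThan card_mono finite_lessThan)
    have "\<phi> T * (\<Sum>y\<in>Y. \<psi> y T * pmf q y)
        \<le> \<phi> T * (1 - real c / real k * (real (card (Iset \<pi> k T f)) / real k)) ^ k"
      using a k0 unfolding \<phi>_def by (intro mult_left_mono) auto
    also have "\<dots> \<le> 1 / real c" unfolding \<phi>_def by (rule final_numeric[OF N c])
    finally show "\<phi> T * (\<Sum>y\<in>Y. \<psi> y T * pmf q y) \<le> 1 / real c" .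
  qed auto
  also have "\<dots> = 1 / real c"
  proof -
    have "(\<Sum>T\<in>TT. pmf P T) = 1" using sum_pmf_eq_1[OF finTT, of P] by (simp add: TT_def)
    then show ?thesis by (simp add: sum_divide_distrib[symmetric])
  qed
  finally show ?thesis .
qed

lemma sum_ind_Iset:
  "(\<Sum>i<k. (if Aok \<pi> S i f \<and> X then 1 else 0 :: real)) = real (card (Iset \<pi> k S f)) * (if X then 1 else 0)"
proof (cases X)
  case True
  have "(\<Sum>i<k. (if Aok \<pi> S i f then 1 else 0 :: real)) = real (card ({..<k} \<inter> {i. Aok \<pi> S i f}))"
    by (simp add: sum.If_cases)
  moreover have "{..<k} \<inter> {i. Aok \<pi> S i f} = Iset \<pi> k S f" unfolding Iset_def by auto
  ultimately show ?thesis using True by simp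
qed simp

lemma det_bound:
  fixes w :: "'a set \<Rightarrow> real"
  assumes fin: "finite E" and two: "\<forall>e\<in>E. finite e \<and> card e = 2"
    and setpi: "set \<pi> = E" and sorted: "sorted_wrt (\<lambda>e f. w e \<ge> w f) \<pi>"
    and wpos: "\<forall>e\<in>E. w e \<ge> 0"
    and MsE: "Ms \<subseteq> E" and Msm: "is_matching Ms" and k: "0 < k"
  shows "sum w Ms - (\<Sum>f\<in>Ms. w f * (real (card (Iset \<pi> k S f)) / real k *
            (if S f \<inter> Iset \<pi> k S f = {} then 1 else 0)))
           \<le> 2 * opt w (greedy_union \<pi> k S)"
proof -
  let ?X = "\<lambda>f. S f \<inter> Iset \<pi> k S f = {}"
  have "(\<Sum>i<k. sum w Ms - (\<Sum>f\<in>Ms. w f * (if Aok \<pi> S i f \<and> ?X f then 1 else 0)))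
        \<le> (\<Sum>i<k. 2 * opt w (greedy_union \<pi> k S))"
    by (intro sum_mono core_i[OF fin two setpi sorted wpos MsE Msm]) auto
  moreover have "(\<Sum>i<k. sum w Ms - (\<Sum>f\<in>Ms. w f * (if Aok \<pi> S i f \<and> ?X f then 1 else 0)))
      = real k * sum w Ms - (\<Sum>f\<in>Ms. w f * (real (card (Iset \<pi> k S f)) * (if ?X f then 1 else 0)))"
  proof -
    have "(\<Sum>i<k. sum w Ms - (\<Sum>f\<in>Ms. w f * (if Aok \<pi> S i f \<and> ?X f then 1 else 0)))
        = real k * sum w Ms - (\<Sum>i<k. \<Sum>f\<in>Ms. w f * (if Aok \<pi> S i f \<and> ?X f then 1 else 0))"
      by (simp add: sum_subtractf)
    also have "(\<Sum>i<k. \<Sum>f\<in>Ms. w f * (if Aok \<pi> S i f \<and> ?X f then 1 else 0))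
        = (\<Sum>f\<in>Ms. w f * (\<Sum>i<k. (if Aok \<pi> S i f \<and> ?X f then 1 else 0)))"
      by (subst sum.swap) (simp add: sum_distrib_left)
    also have "\<dots> = (\<Sum>f\<in>Ms. w f * (real (card (Iset \<pi> k S f)) * (if ?X f then 1 else 0)))"
      by (simp only: sum_ind_Iset)
    finally show ?thesis .
  qed
  moreover have "(\<Sum>f\<in>Ms. w f * (real (card (Iset \<pi> k S f)) * (if ?X f then 1 else 0)))
      = real k * (\<Sum>f\<in>Ms. w f * (real (card (Iset \<pi> k S f)) / real k * (if ?X f then 1 else 0)))"
    using k by (simp add: sum_distrib_left field_simps)
  ultimately have "real k * (sum w Ms - (\<Sum>f\<in>Ms. w f * (real (card (Iset \<pi> k S f)) / real k * (if ?X f then 1 else 0))))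
      \<le> real k * (2 * opt w (greedy_union \<pi> k S))"
    by (simp add: algebra_simps)
  then show ?thesis using k by (simp add: mult_le_cancel_left_pos)
qed

theorem lemma3p2:
  shows "\<exists>C::real. C > 0 \<and>
    (\<forall>(V::nat set) (E::nat set set) (w::nat set \<Rightarrow> real) (k::nat) (c::nat) (\<pi>::nat set list).
       simple_graph_on V E \<longrightarrow> (\<forall>e\<in>E. w e \<ge> 0) \<longrightarrow> 2 \<le> c \<longrightarrow> c \<le> k \<longrightarrow>
       distinct \<pi> \<longrightarrow> set \<pi> = E \<longrightarrow> sorted_wrt (\<lambda>e f. w e \<ge> w f) \<pi> \<longrightarrow>
       measure_pmf.expectation (random_clustering E k c) (\<lambda>S. opt w (greedy_union \<pi> k S))
         \<ge> (1/2 - C * ln (real c) / real c) * opt w E)"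
proof (intro exI[of _ "1 / (2 * ln 2)"] conjI allI impI)
  show "0 < 1 / (2 * ln (2::real))" by simp
  fix V :: "nat set" and E :: "nat set set" and w :: "nat set \<Rightarrow> real" and k c :: nat and \<pi> :: "nat set list"
  assume G: "simple_graph_on V E" and wpos: "\<forall>e\<in>E. w e \<ge> 0" and c2: "2 \<le> c" and ck: "c \<le> k"
    and dist: "distinct \<pi>" and setpi: "set \<pi> = E" and sorted: "sorted_wrt (\<lambda>e f. w e \<ge> w f) \<pi>"
  have finV: "finite V" using G unfolding simple_graph_on_def by blast
  have EV: "E \<subseteq> Pow V" using G unfolding simple_graph_on_def by blast
  have finE: "finite E" using finV EV by (meson finite_Pow_iff finite_subset)
  have two: "\<forall>e\<in>E. finite e \<and> card e = 2" using G unfolding simple_graph_on_def by auto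
  define \<M> where "\<M> = {M. M \<subseteq> E \<and> is_matching M}"
  have finM: "finite \<M>" unfolding \<M>_def using finE by simp
  have neM: "{} \<in> \<M>" unfolding \<M>_def is_matching_def by simp
  have "opt w E \<in> sum w ` \<M>" unfolding opt_def \<M>_def[symmetric]
    using finM neM by (intro Max_in) auto
  then obtain Ms where MsE: "Ms \<subseteq> E" and Msm: "is_matching Ms" and Msopt: "sum w Ms = opt w E"
    unfolding \<M>_def by auto
  have sumeq: "(\<Sum>f\<in>Ms. w f * (1 / real c)) = opt w E / real c"
    using Msopt by (simp add: sum_divide_distrib[symmetric])
  have opt0: "0 \<le> opt w E" using opt_ge[OF finE, of "{}" w] by (simp add: is_matching_def)
  have k0: "0 < k" using c2 ck by simp
  define Q where "Q f S = real (card (Iset \<pi> k S f)) / real k * (if S f \<inter> Iset \<pi> k S f = {} then 1 else 0)"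
    for f and S :: "nat set \<Rightarrow> nat set"
  define RC where "RC = random_clustering E k c"
  have finRC: "finite (set_pmf RC)"
  proof -
    have "set_pmf RC \<subseteq> PiE_dflt E {} (set_pmf \<circ> (\<lambda>_. cluster_set_pmf k c))"
      unfolding RC_def random_clustering_def by (rule set_Pi_pmf_subset') (rule finE)
    moreover have "finite (PiE_dflt E {} (set_pmf \<circ> (\<lambda>_. cluster_set_pmf k c)))"
      using finE finite_set_pmf_cluster[OF ck] by (intro finite_PiE_dflt) auto
    ultimately show ?thesis by (rule finite_subset)
  qed
  have integ: "integrable (measure_pmf RC) (g :: _ \<Rightarrow> real)" for g
    using finRC by (rule integrable_measure_pmf_finite)
  have det: "(sum w Ms - (\<Sum>f\<in>Ms. w f * Q f S)) / 2 \<le> opt w (greedy_union \<pi> k S)" for S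
    using det_bound[OF finE two setpi sorted wpos MsE Msm k0, of S] unfolding Q_def by simp
  have m1: "measure_pmf.expectation RC (\<lambda>S. (sum w Ms - (\<Sum>f\<in>Ms. w f * Q f S)) / 2)
      \<le> measure_pmf.expectation RC (\<lambda>S. opt w (greedy_union \<pi> k S))"
    by (rule Bochner_Integration.integral_mono[OF integ integ det])
  have m2: "measure_pmf.expectation RC (\<lambda>S. (sum w Ms - (\<Sum>f\<in>Ms. w f * Q f S)) / 2)
      = (sum w Ms - (\<Sum>f\<in>Ms. w f * measure_pmf.expectation RC (Q f))) / 2"
  proof -
    have "measure_pmf.expectation RC (\<lambda>S. (sum w Ms - (\<Sum>f\<in>Ms. w f * Q f S)) / 2)
        = measure_pmf.expectation RC (\<lambda>S. sum w Ms - (\<Sum>f\<in>Ms. w f * Q f S)) / 2"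
      by (rule integral_divide_zero)
    also have "measure_pmf.expectation RC (\<lambda>S. sum w Ms - (\<Sum>f\<in>Ms. w f * Q f S))
        = measure_pmf.expectation RC (\<lambda>S. sum w Ms) - measure_pmf.expectation RC (\<lambda>S. \<Sum>f\<in>Ms. w f * Q f S)"
      by (rule Bochner_Integration.integral_diff[OF integ integ])
    also have "measure_pmf.expectation RC (\<lambda>S. \<Sum>f\<in>Ms. w f * Q f S)
        = (\<Sum>f\<in>Ms. measure_pmf.expectation RC (\<lambda>S. w f * Q f S))"
      by (rule Bochner_Integration.integral_sum) (rule integ)
    also have "\<dots> = (\<Sum>f\<in>Ms. w f * measure_pmf.expectation RC (Q f))"
      by (intro sum.cong refl) (simp add: integral_mult_right_zero)
    finally show ?thesis by simp
  qed
  have m3: "(\<Sum>f\<in>Ms. w f * measure_pmf.expectation RC (Q f)) \<le> (\<Sum>f\<in>Ms. w f * (1 / real c))"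
  proof (intro sum_mono mult_left_mono)
    fix f assume f: "f \<in> Ms"
    show "measure_pmf.expectation RC (Q f) \<le> 1 / real c"
      unfolding RC_def Q_def using expect_Q[OF finE _ _ ck, of f \<pi>] f MsE c2 by auto
    show "0 \<le> w f" using f MsE wpos by auto
  qed
  have main: "(opt w E - opt w E / real c) / 2 \<le> measure_pmf.expectation RC (\<lambda>S. opt w (greedy_union \<pi> k S))"
  proof -
    have "(sum w Ms - (\<Sum>f\<in>Ms. w f * measure_pmf.expectation RC (Q f))) / 2
       \<le> measure_pmf.expectation RC (\<lambda>S. opt w (greedy_union \<pi> k S))" using m1 m2 by simp
    moreover have "(opt w E - opt w E / real c) / 2 \<le> (sum w Ms - (\<Sum>f\<in>Ms. w f * measure_pmf.expectation RC (Q f))) / 2"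
    proof -
      have gen: "\<And>X Y A Z W. (X::real) \<le> Y \<Longrightarrow> A = Z \<Longrightarrow> Y = W \<Longrightarrow> (Z - W) / 2 \<le> (A - X) / 2"
        by (simp add: divide_right_mono)
      show ?thesis by (rule gen[OF m3 Msopt sumeq])
    qed
    ultimately show ?thesis by linarith
  qed
  have lnc: "ln 2 \<le> ln (real c)" using c2 by simp
  have ln2: "0 < ln (2::real)" by simp
  have "1 / 2 \<le> 1 / (2 * ln 2) * ln (real c)" using lnc ln2 by (simp add: field_simps)
  then have "(1 / 2 - 1 / (2 * ln 2) * ln (real c) / real c) \<le> (1 - 1 / real c) / 2"
    using c2 by (simp add: field_simps)
  then have "(1 / 2 - 1 / (2 * ln 2) * ln (real c) / real c) * opt w E \<le> (1 - 1 / real c) / 2 * opt w E"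
    using opt0 by (rule mult_right_mono)
  also have "\<dots> = (opt w E - opt w E / real c) / 2" by (simp add: field_simps)
  finally show "(1 / 2 - 1 / (2 * ln 2) * ln (real c) / real c) * opt w E
      \<le> measure_pmf.expectation (random_clustering E k c) (\<lambda>S. opt w (greedy_union \<pi> k S))"
    using main unfolding RC_def by linarith
qed


end
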